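(* Let $T$ be a positive integer, $(\Omega,\mathcal{F},P)$ a probability space, and $\mathbb{F}=(\mathcal{F}_t)_{t=0}^T$, $\mathbb{G}=(\mathcal{G}_t)_{t=0}^T$ two filtrations with $\mathcal{G}_t\subseteq\mathcal{F}_t$ for every $t$. Let $X^2,Y^2$ be real-valued processes $(X^2_t)_{t=0}^T$, $(Y^2_t)_{t=0}^T$ adapted to $\mathbb{G}$ with $E\left(\max_{0\le t\le T}|X^2_t|\right)<\infty$ and $E\left(\max_{0\le t\le T}|Y^2_t|\right)<\infty$. Let $\tau\in\mathcal{T}(\mathbb{F})$ and let $t\in\{0,1,\dots,T-1\}$. Then there exists $\hat{\nu}_t\in\mathcal{T}_t(\mathbb{G})$ such that, $P$-a.s., \begin{align*} &E\left[X^2_{\hat{\nu}_t}\mathbf{1}_{\{\hat{\nu}_t<\tau\}}+Y^2_{\tau}\mathbf{1}_{\{\tau\leq\hat{\nu}_t\}}\,\big|\,\mathcal{G}_t^\tau\right]=\operatorname{ess\,sup}_{\nu\in\mathcal{T}_t(\mathbb{G}^\tau)}E\left[X^2_\nu\mathbf{1}_{\{\nu<\tau\}}+Y^2_{\tau}\mathbf{1}_{\{\tau\leq\nu\}}\,\big|\,\mathcal{G}_t^\tau\right]\\ &=Y^2_\tau\mathbf{1}_{\{\tau\leq t\}}+\mathbf{1}_{\{\tau>t\}}\operatorname{ess\,sup}_{\nu\in\mathcal{T}_t(\mathbb{G})}E_{P|\{\tau>t\}}\left[X^2_\nu\mathbf{1}_{\{\nu<\tau\}}+Y^2_\tau\mathbf{1}_{\{\tau\leq\nu\}}\,\big|\,\mathcal{G}_t\right].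 \end{align*}
   Context: Time is discrete, taking values in $\{0,1,\dots,T\}$. For a filtration $\mathbb{H}$, $\mathcal{T}(\mathbb{H})$ denotes the set of $\mathbb{H}$-stopping times with values in $\{0,\dots,T\}$, and $\mathcal{T}_t(\mathbb{H})$ the set of $\mathbb{H}$-stopping times $\nu$ with $P(t\le\nu\le T)=1$. For $\tau\in\mathcal{T}(\mathbb{F})$, the filtration $\mathbb{G}^\tau=(\mathcal{G}^\tau_t)_{t=0}^T$ is defined by $\mathcal{G}_t^\tau=\mathcal{G}_t\vee\sigma\{\mathbf{1}_{\{\tau\le s\}};0\le s\le t\}$. $E_{P|\{\tau>t\}}[\,\cdot\,|\mathcal{G}_t]$ denotes conditional expectation given $\mathcal{G}_t$ under the conditional probability measure $P(\cdot\mid\tau>t)$; when $P(\tau>t)=0$ the term multiplied by $\mathbf{1}_{\{\tau>t\}}$ is understood to vanish. *)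

theory Defs
  imports "HOL-Probability.Probability"
begin

text \<open>Discrete time horizon {0..T}. A filtration is a function H :: nat => 'a measure,
  only its values at indices 0..T matter.\<close>

definition stopping_time_upto :: "'a measure \<Rightarrow> (nat \<Rightarrow> 'a measure) \<Rightarrow> nat \<Rightarrow> ('a \<Rightarrow> nat) \<Rightarrow> bool" where
  "stopping_time_upto M H T \<nu> \<longleftrightarrow>
     (\<forall>\<omega>\<in>space M. \<nu> \<omega> \<le> T) \<and> (\<forall>s\<le>T. {\<omega>\<in>space M. \<nu> \<omega> \<le> s} \<in> sets (H s))"

definition stopping_times_from :: "'a measure \<Rightarrow> (nat \<Rightarrow> 'a measure) \<Rightarrow> nat \<Rightarrow> nat \<Rightarrow> ('a \<Rightarrow> nat) set" where
  "stopping_times_from M H T t = {\<nu>. stopping_time_upto M H T \<nu> \<and> (AE \<omega> in M. t \<le> \<nu> \<omega>)}"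

definition prog_enlargement :: "'a measure \<Rightarrow> (nat \<Rightarrow> 'a measure) \<Rightarrow> ('a \<Rightarrow> nat) \<Rightarrow> nat \<Rightarrow> 'a measure" where
  "prog_enlargement M G \<tau> t =
     sigma (space M) (sets (G t) \<union> {{\<omega>\<in>space M. \<tau> \<omega> \<le> s} | s. s \<le> t})"

definition is_ess_sup_family :: "'a measure \<Rightarrow> ('a \<Rightarrow> ereal) set \<Rightarrow> ('a \<Rightarrow> ereal) \<Rightarrow> bool" where
  "is_ess_sup_family N \<Phi> Z \<longleftrightarrow>
     Z \<in> borel_measurable N \<and>
     (\<forall>\<phi>\<in>\<Phi>. AE \<omega> in N. \<phi> \<omega> \<le> Z \<omega>) \<and>
     (\<forall>Z'. Z' \<in> borel_measurable N \<and> (\<forall>\<phi>\<in>\<Phi>. AE \<omega> in N. \<phi> \<omega> \<le> Z' \<omega>)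
           \<longrightarrow> (AE \<omega> in N. Z \<omega> \<le> Z' \<omega>))"

definition ess_sup_family :: "'a measure \<Rightarrow> ('a \<Rightarrow> ereal) set \<Rightarrow> ('a \<Rightarrow> ereal)" where
  "ess_sup_family N \<Phi> = (SOME Z. is_ess_sup_family N \<Phi> Z)"

definition payoff :: "(nat \<Rightarrow> 'a \<Rightarrow> real) \<Rightarrow> (nat \<Rightarrow> 'a \<Rightarrow> real) \<Rightarrow> ('a \<Rightarrow> nat) \<Rightarrow> ('a \<Rightarrow> nat) \<Rightarrow> 'a \<Rightarrow> real" where
  "payoff X Y \<tau> \<nu> \<omega> =
     X (\<nu> \<omega>) \<omega> * (if \<nu> \<omega> < \<tau> \<omega> then 1 else 0) + Y (\<tau> \<omega>) \<omega> * (if \<tau> \<omega> \<le> \<nu> \<omega> then 1 else 0)"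

end

theory Submission
  imports Defs
begin


lemma stop_meas:
  fixes \<nu> :: "'a \<Rightarrow> nat" and T :: nat
  assumes "\<forall>\<omega>\<in>space N. \<nu> \<omega> \<le> T" "\<forall>s\<le>T. {\<omega>\<in>space N. \<nu> \<omega> \<le> s} \<in> sets N"
  shows "\<nu> \<in> measurable N (count_space {..T})"
proof (rule iffD2[OF measurable_count_space_eq2[OF finite_atMost]], intro conjI ballI)
  show "\<nu> \<in> space N \<rightarrow> {..T}" using assms(1) by auto
  fix a assume a: "a \<in> {..T}"
  show "\<nu> -` {a} \<inter> space N \<in> sets N"
  proof (cases a)
    case 0
    then have "\<nu> -` {a} \<inter> space N = {\<omega>\<in>space N. \<nu> \<omega> \<le> 0}" by auto
    then show ?thesis using assms(2) by auto
  next
    case (Suc b)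
    then have "\<nu> -` {a} \<inter> space N = {\<omega>\<in>space N. \<nu> \<omega> \<le> a} - {\<omega>\<in>space N. \<nu> \<omega> \<le> b}" by auto
    then show ?thesis using assms(2) a Suc by (auto intro!: sets.Diff)
  qed
qed

lemma comp_meas:
  fixes \<nu> :: "'a \<Rightarrow> nat" and T :: nat and f :: "nat \<Rightarrow> 'a \<Rightarrow> real"
  assumes "\<nu> \<in> measurable N (count_space {..T})"
    and "\<And>s. s \<le> T \<Longrightarrow> f s \<in> borel_measurable N"
  shows "(\<lambda>\<omega>. f (\<nu> \<omega>) \<omega>) \<in> borel_measurable N"
  by (rule measurable_compose_countable'[where I="{..T}"]) (use assms in \<open>auto simp: countable_finite\<close>)




locale thm1 =
  fixes M :: "'a measure" and F G :: "nat \<Rightarrow> 'a measure" and T t :: nat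
    and X Y :: "nat \<Rightarrow> 'a \<Rightarrow> real" and \<tau> :: "'a \<Rightarrow> nat"
  assumes prob: "prob_space M"
    and F_sub: "\<And>s. s \<le> T \<Longrightarrow> subalgebra M (F s)"
    and G_sub: "\<And>s. s \<le> T \<Longrightarrow> subalgebra M (G s)"
    and G_mono: "\<And>r s. r \<le> s \<Longrightarrow> s \<le> T \<Longrightarrow> sets (G r) \<subseteq> sets (G s)"
    and X_adapted: "\<And>s. s \<le> T \<Longrightarrow> X s \<in> borel_measurable (G s)"
    and Y_adapted: "\<And>s. s \<le> T \<Longrightarrow> Y s \<in> borel_measurable (G s)"
    and X_int: "integrable M (\<lambda>\<omega>. Max ((\<lambda>s. \<bar>X s \<omega>\<bar>) ` {0..T}))"
    and Y_int: "integrable M (\<lambda>\<omega>. Max ((\<lambda>s. \<bar>Y s \<omega>\<bar>) ` {0..T}))"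
    and tau: "stopping_time_upto M F T \<tau>"
begin

abbreviation "H k \<equiv> prog_enlargement M G \<tau> k"
abbreviation "R k \<equiv> payoff X Y \<tau> (\<lambda>_. k)"

lemma tau_le_M: "s \<le> T \<Longrightarrow> {\<omega>\<in>space M. \<tau> \<omega> \<le> s} \<in> sets M"
  using tau F_sub unfolding stopping_time_upto_def subalgebra_def by blast

lemma tau_bound: "\<omega> \<in> space M \<Longrightarrow> \<tau> \<omega> \<le> T"
  using tau unfolding stopping_time_upto_def by blast

lemma gens_sub:
  assumes "k \<le> T"
  shows "sets (G k) \<union> {{\<omega>\<in>space M. \<tau> \<omega> \<le> s} | s. s \<le> k} \<subseteq> sets M"
  using G_sub[OF assms] tau_le_M assms unfolding subalgebra_def by auto

lemma gens_pow:
  assumes "k \<le> T"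
  shows "sets (G k) \<union> {{\<omega>\<in>space M. \<tau> \<omega> \<le> s} | s. s \<le> k} \<subseteq> Pow (space M)"
  using gens_sub[OF assms] sets.sets_into_space by blast

lemma sets_H:
  assumes "k \<le> T"
  shows "sets (H k) = sigma_sets (space M) (sets (G k) \<union> {{\<omega>\<in>space M. \<tau> \<omega> \<le> s} | s. s \<le> k})"
  unfolding prog_enlargement_def using gens_pow[OF assms] by (simp add: sets_measure_of)

lemma space_H: "space (H k) = space M"
  unfolding prog_enlargement_def by (simp add: space_measure_of_conv)

lemma H_sub: "k \<le> T \<Longrightarrow> subalgebra M (H k)"
  unfolding subalgebra_def using space_H sets_H sets.sigma_sets_subset[OF gens_sub] by simp

lemma G_H: "k \<le> T \<Longrightarrow> sets (G k) \<subseteq> sets (H k)"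
  unfolding sets_H by (rule subset_trans[OF Un_upper1 sigma_sets_superset_generator])

lemma tau_H: "s \<le> k \<Longrightarrow> k \<le> T \<Longrightarrow> {\<omega>\<in>space M. \<tau> \<omega> \<le> s} \<in> sets (H k)"
  unfolding sets_H by (rule sigma_sets.Basic) blast

lemma H_mono: assumes "r \<le> s" "s \<le> T" shows "sets (H r) \<subseteq> sets (H s)"
proof -
  have "sets (G r) \<union> {{\<omega>\<in>space M. \<tau> \<omega> \<le> u} | u. u \<le> r} \<subseteq> sets (H s)"
  proof (rule Un_least)
    show "sets (G r) \<subseteq> sets (H s)" using G_mono[OF assms] G_H[OF assms(2)] by blast
    show "{{\<omega>\<in>space M. \<tau> \<omega> \<le> u} | u. u \<le> r} \<subseteq> sets (H s)"
    proof clarify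
      fix u assume "u \<le> r"
      then show "{\<omega>\<in>space M. \<tau> \<omega> \<le> u} \<in> sets (H s)" using tau_H[of u s] assms by simp
    qed
  qed
  then have "sigma_sets (space (H s)) (sets (G r) \<union> {{\<omega>\<in>space M. \<tau> \<omega> \<le> u} | u. u \<le> r}) \<subseteq> sets (H s)"
    by (rule sets.sigma_sets_subset)
  then show ?thesis unfolding space_H sets_H[OF le_trans[OF assms]] .
qed

lemma subalg_GH: "s \<le> k \<Longrightarrow> k \<le> T \<Longrightarrow> subalgebra (H k) (G s)"
proof -
  assume a: "s \<le> k" "k \<le> T"
  then have "space (G s) = space M" using G_sub[of s] by (simp add: subalgebra_def)
  moreover have "sets (G s) \<subseteq> sets (H k)" using G_mono[OF a] G_H[OF a(2)] by blast
  ultimately show ?thesis unfolding subalgebra_def by (simp add: space_H)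
qed

lemma subalg_HH: "r \<le> s \<Longrightarrow> s \<le> T \<Longrightarrow> subalgebra (H s) (H r)"
  unfolding subalgebra_def by (simp add: H_mono space_H)

lemma sfs_H: "k \<le> T \<Longrightarrow> sigma_finite_subalgebra M (H k)"
proof -
  assume k: "k \<le> T"
  interpret prob_space M by (rule prob)
  have "finite_measure_subalgebra M (H k)"
    by (unfold_locales, rule H_sub[OF k])
  then show ?thesis by (rule finite_measure_subalgebra_is_sigma_finite)
qed

lemma trace:
  assumes k: "k \<le> T" and D: "D \<in> sets (H k)"
  shows "\<exists>B\<in>sets (G k). D \<inter> {\<omega>\<in>space M. k < \<tau> \<omega>} = B \<inter> {\<omega>\<in>space M. k < \<tau> \<omega>}"
proof -
  let ?A = "{\<omega>\<in>space M. k < \<tau> \<omega>}"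
  have sp: "space (G k) = space M" using G_sub[OF k] by (simp add: subalgebra_def)
  have "D \<in> sigma_sets (space M) (sets (G k) \<union> {{\<omega>\<in>space M. \<tau> \<omega> \<le> s} | s. s \<le> k})"
    using D sets_H[OF k] by simp
  then show ?thesis
  proof induction
    case (Basic a)
    then show ?case
    proof
      assume "a \<in> sets (G k)" then show ?thesis by blast
    next
      assume "a \<in> {{\<omega>\<in>space M. \<tau> \<omega> \<le> s} | s. s \<le> k}"
      then have "a \<inter> ?A = {} \<inter> ?A" by auto
      then show ?thesis using sets.empty_sets[of "G k"] by (intro bexI[of _ "{}"]) auto
    qed
  next
    case Empty
    show ?case using sets.empty_sets[of "G k"] by (intro bexI[of _ "{}"]) auto
  next
    case (Compl a)
    then obtain B where B: "B \<in> sets (G k)" "a \<inter> ?A = B \<inter> ?A" by blast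
    have "(space M - a) \<inter> ?A = ?A - (a \<inter> ?A)" by blast
    also have "\<dots> = ?A - (B \<inter> ?A)" using B(2) by simp
    also have "\<dots> = (space (G k) - B) \<inter> ?A" unfolding sp by blast
    finally have "(space M - a) \<inter> ?A = (space (G k) - B) \<inter> ?A" .
    then show ?case using B(1) by (intro bexI[of _ "space (G k) - B"]) auto
  next
    case (Union a)
    then have "\<forall>i. \<exists>B. B \<in> sets (G k) \<and> a i \<inter> ?A = B \<inter> ?A" by blast
    then obtain B where B: "\<And>i. B i \<in> sets (G k)" "\<And>i. a i \<inter> ?A = B i \<inter> ?A" by metis
    have "(\<Union>i. a i) \<inter> ?A = (\<Union>i. a i \<inter> ?A)" by blast
    also have "\<dots> = (\<Union>i. B i \<inter> ?A)" using B(2) by simp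
    also have "\<dots> = (\<Union>i. B i) \<inter> ?A" by blast
    finally have "(\<Union>i. a i) \<inter> ?A = (\<Union>i. B i) \<inter> ?A" .
    moreover have "(\<Union>i. B i) \<in> sets (G k)" using B(1) by auto
    ultimately show ?case by (intro bexI[of _ "\<Union>i. B i"])
  qed
qed

end


context thm1 begin

lemma X_M: "s \<le> T \<Longrightarrow> X s \<in> borel_measurable M"
  using measurable_from_subalg[OF G_sub X_adapted] .
lemma Y_M: "s \<le> T \<Longrightarrow> Y s \<in> borel_measurable M"
  using measurable_from_subalg[OF G_sub Y_adapted] .

lemma tau_meas: "\<tau> \<in> measurable M (count_space {..T})"
  by (rule stop_meas) (use tau_bound tau_le_M in auto)

lemma to_univ: "f \<in> measurable N (count_space {..(T'::nat)}) \<Longrightarrow> f \<in> measurable N (count_space UNIV)"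
  by (rule measurable_compose[where g="\<lambda>x. x"]) auto

lemma MX_int: "integrable M (\<lambda>\<omega>. Max ((\<lambda>s. \<bar>X s \<omega>\<bar>) ` {0..T}) + Max ((\<lambda>s. \<bar>Y s \<omega>\<bar>) ` {0..T}))"
  using X_int Y_int by auto

lemma payoff_bound:
  assumes "\<nu> \<omega> \<le> T" "\<tau> \<omega> \<le> T"
  shows "norm (payoff X Y \<tau> \<nu> \<omega>) \<le> norm (Max ((\<lambda>s. \<bar>X s \<omega>\<bar>) ` {0..T}) + Max ((\<lambda>s. \<bar>Y s \<omega>\<bar>) ` {0..T}))"
proof -
  have a: "\<bar>X (\<nu> \<omega>) \<omega>\<bar> \<le> Max ((\<lambda>s. \<bar>X s \<omega>\<bar>) ` {0..T})"
    by (rule Max_ge) (use assms in auto)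
  have b: "\<bar>Y (\<tau> \<omega>) \<omega>\<bar> \<le> Max ((\<lambda>s. \<bar>Y s \<omega>\<bar>) ` {0..T})"
    by (rule Max_ge) (use assms in auto)
  have "0 \<le> \<bar>X (\<nu> \<omega>) \<omega>\<bar>" "0 \<le> \<bar>Y (\<tau> \<omega>) \<omega>\<bar>" by auto
  then have "norm (payoff X Y \<tau> \<nu> \<omega>) \<le> Max ((\<lambda>s. \<bar>X s \<omega>\<bar>) ` {0..T}) + Max ((\<lambda>s. \<bar>Y s \<omega>\<bar>) ` {0..T})"
    unfolding payoff_def using a b by (auto simp: abs_mult)
  also have "\<dots> \<le> norm (Max ((\<lambda>s. \<bar>X s \<omega>\<bar>) ` {0..T}) + Max ((\<lambda>s. \<bar>Y s \<omega>\<bar>) ` {0..T}))"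
    by simp
  finally show ?thesis .
qed

lemma R_H: assumes k: "k \<le> T" shows "R k \<in> borel_measurable (H k)"
proof -
  have m: "(\<lambda>\<omega>. min (\<tau> \<omega>) k) \<in> measurable (H k) (count_space {..k})"
  proof (rule stop_meas, simp, intro allI impI)
    fix s assume s: "s \<le> k"
    show "{\<omega> \<in> space (H k). min (\<tau> \<omega>) k \<le> s} \<in> sets (H k)"
    proof (cases "s = k")
      case True
      then show ?thesis by simp
    next
      case False
      then have "{\<omega> \<in> space (H k). min (\<tau> \<omega>) k \<le> s} = {\<omega> \<in> space M. \<tau> \<omega> \<le> s}"
        using s by (auto simp: space_H)
      then show ?thesis using tau_H[OF s k] by simp
    qed
  qed
  have y: "(\<lambda>\<omega>. Y (min (\<tau> \<omega>) k) \<omega>) \<in> borel_measurable (H k)"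
    by (rule comp_meas[OF m]) (rule measurable_from_subalg[OF subalg_GH[OF _ k] Y_adapted], auto intro: le_trans[OF _ k])
  have x: "X k \<in> borel_measurable (H k)"
    by (rule measurable_from_subalg[OF subalg_GH[OF _ k] X_adapted]) (auto simp: k)
  have i0: "indicator {\<omega>\<in>space M. \<tau> \<omega> \<le> k} \<in> borel_measurable (H k)"
    using tau_H[OF order.refl k] by simp
  have i1: "(\<lambda>\<omega>. if \<tau> \<omega> \<le> k then 1 else (0::real)) \<in> borel_measurable (H k)"
    by (rule measurable_cong[THEN iffD1, OF _ i0]) (auto simp: space_H indicator_def)
  have i2: "(\<lambda>\<omega>. if k < \<tau> \<omega> then 1 else (0::real)) = (\<lambda>\<omega>. 1 - (if \<tau> \<omega> \<le> k then 1 else 0))"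
    by auto
  have "R k = (\<lambda>\<omega>. X k \<omega> * (1 - (if \<tau> \<omega> \<le> k then 1 else 0)) + Y (min (\<tau> \<omega>) k) \<omega> * (if \<tau> \<omega> \<le> k then 1 else 0))"
    unfolding payoff_def by (auto simp: fun_eq_iff min_def)
  also have "\<dots> \<in> borel_measurable (H k)"
    using x y i1 by measurable
  finally show ?thesis .
qed

lemma payoff_meas:
  assumes "\<forall>\<omega>\<in>space M. \<nu> \<omega> \<le> T" "\<forall>s\<le>T. {\<omega>\<in>space M. \<nu> \<omega> \<le> s} \<in> sets M"
  shows "payoff X Y \<tau> \<nu> \<in> borel_measurable M" "integrable M (payoff X Y \<tau> \<nu>)"
proof -
  have m: "\<nu> \<in> measurable M (count_space {..T})" by (rule stop_meas[OF assms])
  have "(\<lambda>\<omega>. R (\<nu> \<omega>) \<omega>) \<in> borel_measurable M"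
    by (rule comp_meas[OF m]) (rule measurable_from_subalg[OF H_sub R_H], auto)
  moreover have "(\<lambda>\<omega>. R (\<nu> \<omega>) \<omega>) = payoff X Y \<tau> \<nu>" by (simp add: payoff_def fun_eq_iff)
  ultimately show pm: "payoff X Y \<tau> \<nu> \<in> borel_measurable M" by simp
  show "integrable M (payoff X Y \<tau> \<nu>)"
    by (rule Bochner_Integration.integrable_bound[OF MX_int pm])
       (use payoff_bound assms tau_bound in auto)
qed

lemma R_meas: "k \<le> T \<Longrightarrow> payoff X Y \<tau> (\<lambda>_. k) \<in> borel_measurable M" "k \<le> T \<Longrightarrow> integrable M (payoff X Y \<tau> (\<lambda>_. k))"
  using payoff_meas[of "\<lambda>_. k"] by auto

lemma Hstop_M:
  assumes "stopping_time_upto M (\<lambda>k. H k) T \<nu>"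
  shows "\<forall>\<omega>\<in>space M. \<nu> \<omega> \<le> T" "\<forall>s\<le>T. {\<omega>\<in>space M. \<nu> \<omega> \<le> s} \<in> sets M"
  using assms H_sub unfolding stopping_time_upto_def subalgebra_def by blast+

lemma Gstop_H:
  assumes "stopping_time_upto M G T \<nu>"
  shows "stopping_time_upto M (\<lambda>k. H k) T \<nu>"
  using assms G_H unfolding stopping_time_upto_def by blast

lemma tau_small:
  assumes k: "k \<le> T" and \<sigma>: "\<forall>\<omega>\<in>space M. k \<le> \<sigma> \<omega>"
    and pm: "payoff X Y \<tau> \<sigma> \<in> borel_measurable M" "integrable M (payoff X Y \<tau> \<sigma>)"
  shows "AE \<omega> in M. \<tau> \<omega> \<le> k \<longrightarrow> real_cond_exp M (H k) (payoff X Y \<tau> \<sigma>) \<omega> = R k \<omega>"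
proof -
  interpret sigma_finite_subalgebra M "H k" by (rule sfs_H[OF k])
  let ?S = "{\<omega>\<in>space M. \<tau> \<omega> \<le> k}"
  have SH: "?S \<in> sets (H k)" by (rule tau_H[OF order.refl k])
  have SM: "?S \<in> sets M" by (rule tau_le_M[OF k])
  have IH: "indicator ?S \<in> borel_measurable (H k)" using SH by simp
  have e1: "AE \<omega> in M. real_cond_exp M (H k) (\<lambda>\<omega>. indicator ?S \<omega> * payoff X Y \<tau> \<sigma> \<omega>) \<omega>
      = indicator ?S \<omega> * real_cond_exp M (H k) (payoff X Y \<tau> \<sigma>) \<omega>"
    by (rule real_cond_exp_mult[OF IH pm(1)]) (use integrable_mult_indicator[OF SM pm(2)] in simp)
  have e2: "AE \<omega> in M. real_cond_exp M (H k) (\<lambda>\<omega>. indicator ?S \<omega> * payoff X Y \<tau> \<sigma> \<omega>) \<omega>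
      = real_cond_exp M (H k) (\<lambda>\<omega>. indicator ?S \<omega> * R k \<omega>) \<omega>"
  proof (rule real_cond_exp_cong)
    show "AE \<omega> in M. indicator ?S \<omega> * payoff X Y \<tau> \<sigma> \<omega> = indicator ?S \<omega> * R k \<omega>"
      using \<sigma> by (intro AE_I2) (auto simp: payoff_def indicator_def)
    show "(\<lambda>\<omega>. indicator ?S \<omega> * payoff X Y \<tau> \<sigma> \<omega>) \<in> borel_measurable M" using SM pm(1) by measurable
    show "(\<lambda>\<omega>. indicator ?S \<omega> * R k \<omega>) \<in> borel_measurable M" using SM R_meas[OF k] by measurable
  qed
  have e3: "AE \<omega> in M. real_cond_exp M (H k) (\<lambda>\<omega>. indicator ?S \<omega> * R k \<omega>) \<omega> = indicator ?S \<omega> * R k \<omega>"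
  proof (rule real_cond_exp_F_meas)
    show "integrable M (\<lambda>\<omega>. indicator ?S \<omega> * R k \<omega>)"
      using integrable_mult_indicator[OF SM R_meas(2)[OF k]] by simp
    show "(\<lambda>\<omega>. indicator ?S \<omega> * R k \<omega>) \<in> borel_measurable (H k)"
      using IH R_H[OF k] by measurable
  qed
  show ?thesis using e1 e2 e3 AE_space by eventually_elim (auto simp: indicator_def)
qed

end


context thm1 begin

lemma decomp:
  assumes k: "k \<le> T" and C: "C \<in> sets (H k)" and g: "integrable M g"
  shows "AE \<omega> in M. real_cond_exp M (H k) (\<lambda>\<omega>. indicator C \<omega> * R k \<omega> + (1 - indicator C \<omega>) * g \<omega>) \<omega>
     = indicator C \<omega> * R k \<omega> + (1 - indicator C \<omega>) * real_cond_exp M (H k) g \<omega>"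
proof -
  interpret sigma_finite_subalgebra M "H k" by (rule sfs_H[OF k])
  have CM: "C \<in> sets M" using C H_sub[OF k] by (auto simp: subalgebra_def)
  have gm: "g \<in> borel_measurable M" using g by (rule borel_measurable_integrable)
  have int1: "integrable M (\<lambda>\<omega>. indicator C \<omega> * R k \<omega>)"
    using integrable_mult_indicator[OF CM R_meas(2)[OF k]] by simp
  have eq: "(\<lambda>\<omega>. (1 - indicator C \<omega>) * g \<omega>) = (\<lambda>\<omega>. g \<omega> - indicator C \<omega> * g \<omega>)"
    by (simp add: fun_eq_iff algebra_simps)
  have int2: "integrable M (\<lambda>\<omega>. (1 - indicator C \<omega>) * g \<omega>)"
    unfolding eq using integrable_mult_indicator[OF CM g] g by simp
  have IH: "(indicator C :: 'a \<Rightarrow> real) \<in> borel_measurable (H k)" using C by simp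
  have IH2: "(\<lambda>\<omega>. 1 - indicator C \<omega> :: real) \<in> borel_measurable (H k)"
    using C by (simp add: borel_measurable_diff)
  have a: "AE \<omega> in M. real_cond_exp M (H k) (\<lambda>\<omega>. indicator C \<omega> * R k \<omega> + (1 - indicator C \<omega>) * g \<omega>) \<omega>
     = real_cond_exp M (H k) (\<lambda>\<omega>. indicator C \<omega> * R k \<omega>) \<omega> + real_cond_exp M (H k) (\<lambda>\<omega>. (1 - indicator C \<omega>) * g \<omega>) \<omega>"
    by (rule real_cond_exp_add[OF int1 int2])
  have m1: "AE \<omega> in M. real_cond_exp M (H k) (\<lambda>\<omega>. indicator C \<omega> * R k \<omega>) \<omega> = indicator C \<omega> * real_cond_exp M (H k) (R k) \<omega>"
    by (rule real_cond_exp_mult[OF IH R_meas(1)[OF k] int1])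
  have f: "AE \<omega> in M. real_cond_exp M (H k) (R k) \<omega> = R k \<omega>"
    by (rule real_cond_exp_F_meas[OF R_meas(2)[OF k] R_H[OF k]])
  have m2: "AE \<omega> in M. real_cond_exp M (H k) (\<lambda>\<omega>. (1 - indicator C \<omega>) * g \<omega>) \<omega> = (1 - indicator C \<omega>) * real_cond_exp M (H k) g \<omega>"
    by (rule real_cond_exp_mult[OF IH2 gm int2])
  show ?thesis using a m1 f m2 by eventually_elim simp
qed

lemma tower_mono:
  assumes k: "Suc k \<le> T" and f: "integrable M f" and g: "integrable M g"
    and le: "AE \<omega> in M. real_cond_exp M (H (Suc k)) f \<omega> \<le> real_cond_exp M (H (Suc k)) g \<omega>"
  shows "AE \<omega> in M. real_cond_exp M (H k) f \<omega> \<le> real_cond_exp M (H k) g \<omega>"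
proof -
  have k': "k \<le> T" using k by simp
  interpret K: sigma_finite_subalgebra M "H k" by (rule sfs_H[OF k'])
  interpret K1: sigma_finite_subalgebra M "H (Suc k)" by (rule sfs_H[OF k])
  have t1: "AE \<omega> in M. real_cond_exp M (H k) (real_cond_exp M (H (Suc k)) f) \<omega> = real_cond_exp M (H k) f \<omega>"
    by (rule K.real_cond_exp_nested_subalg[OF H_sub[OF k] subalg_HH[OF _ k] f]) simp
  have t2: "AE \<omega> in M. real_cond_exp M (H k) (real_cond_exp M (H (Suc k)) g) \<omega> = real_cond_exp M (H k) g \<omega>"
    by (rule K.real_cond_exp_nested_subalg[OF H_sub[OF k] subalg_HH[OF _ k] g]) simp
  have m: "AE \<omega> in M. real_cond_exp M (H k) (real_cond_exp M (H (Suc k)) f) \<omega> \<le> real_cond_exp M (H k) (real_cond_exp M (H (Suc k)) g) \<omega>"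
    by (rule K.real_cond_exp_mono[OF le K1.real_cond_exp_int(1)[OF f] K1.real_cond_exp_int(1)[OF g]])
  show ?thesis using t1 t2 m by eventually_elim simp
qed

lemma snell:
  assumes "k \<le> T"
  shows "\<exists>\<sigma>. stopping_time_upto M G T \<sigma> \<and> (\<forall>\<omega>\<in>space M. k \<le> \<sigma> \<omega>) \<and>
     (\<forall>\<nu>. stopping_time_upto M (\<lambda>k. H k) T \<nu> \<and> (AE \<omega> in M. k \<le> \<nu> \<omega>) \<longrightarrow>
        (AE \<omega> in M. real_cond_exp M (H k) (payoff X Y \<tau> \<nu>) \<omega> \<le> real_cond_exp M (H k) (payoff X Y \<tau> \<sigma>) \<omega>))"
  using assms
proof (induction k rule: inc_induct)
  case base
  let ?\<sigma> = "\<lambda>_::'a. T"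
  have st: "stopping_time_upto M G T ?\<sigma>"
    unfolding stopping_time_upto_def
  proof (intro conjI ballI allI impI)
    fix s assume s: "s \<le> T"
    have sp: "space (G s) = space M" using G_sub[OF s] by (simp add: subalgebra_def)
    show "{\<omega> \<in> space M. T \<le> s} \<in> sets (G s)"
    proof (cases "T \<le> s")
      case True then show ?thesis using sets.top[of "G s"] sp by simp
    next
      case False then show ?thesis by simp
    qed
  qed simp
  show ?case
  proof (intro exI conjI allI impI)
    show "stopping_time_upto M G T ?\<sigma>" by (rule st)
    show "\<forall>\<omega>\<in>space M. T \<le> T" by simp
    fix \<nu> assume \<nu>: "stopping_time_upto M (\<lambda>k. H k) T \<nu> \<and> (AE \<omega> in M. T \<le> \<nu> \<omega>)"
    interpret sigma_finite_subalgebra M "H T" by (rule sfs_H) simp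
    note hm = Hstop_M[OF \<nu>[THEN conjunct1]]
    have "AE \<omega> in M. real_cond_exp M (H T) (payoff X Y \<tau> \<nu>) \<omega> = real_cond_exp M (H T) (payoff X Y \<tau> ?\<sigma>) \<omega>"
    proof (rule real_cond_exp_cong)
      show "AE \<omega> in M. payoff X Y \<tau> \<nu> \<omega> = payoff X Y \<tau> ?\<sigma> \<omega>"
        using \<nu>[THEN conjunct2] AE_space
      proof eventually_elim
        case (elim \<omega>) then have "\<nu> \<omega> = T" using hm(1) by (intro antisym) auto
        then show ?case by (simp add: payoff_def)
      qed
      show "payoff X Y \<tau> \<nu> \<in> borel_measurable M" by (rule payoff_meas(1)[OF hm])
      show "payoff X Y \<tau> ?\<sigma> \<in> borel_measurable M" by (rule R_meas(1)) simp
    qed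
    then show "AE \<omega> in M. real_cond_exp M (H T) (payoff X Y \<tau> \<nu>) \<omega> \<le> real_cond_exp M (H T) (payoff X Y \<tau> ?\<sigma>) \<omega>"
      by eventually_elim simp
  qed
next
  case (step k)
  have kT: "k < T" "k \<le> T" "Suc k \<le> T" using step.hyps by auto
  obtain \<sigma>' where \<sigma>'st: "stopping_time_upto M G T \<sigma>'" and \<sigma>'ge: "\<forall>\<omega>\<in>space M. Suc k \<le> \<sigma>' \<omega>"
    and \<sigma>'opt: "\<And>\<nu>. stopping_time_upto M (\<lambda>k. H k) T \<nu> \<Longrightarrow> (AE \<omega> in M. Suc k \<le> \<nu> \<omega>) \<Longrightarrow>
        (AE \<omega> in M. real_cond_exp M (H (Suc k)) (payoff X Y \<tau> \<nu>) \<omega> \<le> real_cond_exp M (H (Suc k)) (payoff X Y \<tau> \<sigma>') \<omega>)"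
    using step.IH by blast
  note \<sigma>'M = Hstop_M[OF Gstop_H[OF \<sigma>'st]]
  note p\<sigma>' = payoff_meas[OF \<sigma>'M]
  interpret K: sigma_finite_subalgebra M "H k" by (rule sfs_H[OF kT(2)])
  define W where "W = real_cond_exp M (H k) (payoff X Y \<tau> \<sigma>')"
  have WH: "W \<in> borel_measurable (H k)" unfolding W_def by simp
  have RH: "R k \<in> borel_measurable (H k)" by (rule R_H[OF kT(2)])
  define D where "D = {\<omega>\<in>space M. W \<omega> \<le> R k \<omega>}"
  have "D \<in> sets (H k)"
  proof -
    have "{\<omega>\<in>space (H k). W \<omega> \<le> R k \<omega>} \<in> sets (H k)" using WH RH by measurable
    then show ?thesis unfolding D_def space_H .
  qed
  then obtain B where B: "B \<in> sets (G k)" and BD: "D \<inter> {\<omega>\<in>space M. k < \<tau> \<omega>} = B \<inter> {\<omega>\<in>space M. k < \<tau> \<omega>}"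
    using trace[OF kT(2)] by blast
  have spG: "space (G k) = space M" using G_sub[OF kT(2)] by (simp add: subalgebra_def)
  have Bsp: "B \<subseteq> space M" using sets.sets_into_space[OF B] spG by simp
  have BH: "B \<in> sets (H k)" using B G_H[OF kT(2)] by blast
  define \<sigma> where "\<sigma> = (\<lambda>\<omega>. if \<omega> \<in> B then k else \<sigma>' \<omega>)"
  have \<sigma>st: "stopping_time_upto M G T \<sigma>"
    unfolding stopping_time_upto_def
  proof (intro conjI ballI allI impI)
    fix \<omega> assume "\<omega> \<in> space M" then show "\<sigma> \<omega> \<le> T"
      using \<sigma>'st kT unfolding \<sigma>_def stopping_time_upto_def by auto
  next
    fix s assume s: "s \<le> T"
    show "{\<omega> \<in> space M. \<sigma> \<omega> \<le> s} \<in> sets (G s)"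
    proof (cases "k \<le> s")
      case True
      have "{\<omega> \<in> space M. \<sigma> \<omega> \<le> s} = B \<union> {\<omega> \<in> space M. \<sigma>' \<omega> \<le> s}"
        using Bsp True unfolding \<sigma>_def by auto
      moreover have "B \<in> sets (G s)" using B G_mono[OF True s] by blast
      moreover have "{\<omega> \<in> space M. \<sigma>' \<omega> \<le> s} \<in> sets (G s)"
        using \<sigma>'st s unfolding stopping_time_upto_def by blast
      ultimately show ?thesis by simp
    next
      case False
      have "False" if "\<omega> \<in> space M" "\<sigma> \<omega> \<le> s" for \<omega>
      proof (cases "\<omega> \<in> B")
        case True then show ?thesis using that False unfolding \<sigma>_def by simp
      next
        case nB: False
        then have "Suc k \<le> \<sigma> \<omega>" using \<sigma>'ge that(1) unfolding \<sigma>_def by simp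
        then show ?thesis using that(2) False by simp
      qed
      then have e: "{\<omega> \<in> space M. \<sigma> \<omega> \<le> s} = {}" by blast
      show ?thesis unfolding e by simp
    qed
  qed
  note \<sigma>M = Hstop_M[OF Gstop_H[OF \<sigma>st]]
  note p\<sigma> = payoff_meas[OF \<sigma>M]
  have \<sigma>ge: "\<forall>\<omega>\<in>space M. k \<le> \<sigma> \<omega>" using \<sigma>'ge unfolding \<sigma>_def by fastforce
  have pay\<sigma>: "payoff X Y \<tau> \<sigma> = (\<lambda>\<omega>. indicator B \<omega> * R k \<omega> + (1 - indicator B \<omega>) * payoff X Y \<tau> \<sigma>' \<omega>)"
    unfolding \<sigma>_def by (auto simp: fun_eq_iff payoff_def indicator_def)
  have E\<sigma>: "AE \<omega> in M. real_cond_exp M (H k) (payoff X Y \<tau> \<sigma>) \<omega> = indicator B \<omega> * R k \<omega> + (1 - indicator B \<omega>) * W \<omega>"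
    unfolding pay\<sigma> W_def by (rule decomp[OF kT(2) BH p\<sigma>'(2)])
  have small: "AE \<omega> in M. \<tau> \<omega> \<le> k \<longrightarrow> W \<omega> = R k \<omega>"
    unfolding W_def by (rule tau_small[OF kT(2) _ p\<sigma>']) (use \<sigma>'ge in auto)
  show ?case
  proof (intro exI conjI allI impI)
    show "stopping_time_upto M G T \<sigma>" by (rule \<sigma>st)
    show "\<forall>\<omega>\<in>space M. k \<le> \<sigma> \<omega>" by (rule \<sigma>ge)
    fix \<nu> assume \<nu>: "stopping_time_upto M (\<lambda>k. H k) T \<nu> \<and> (AE \<omega> in M. k \<le> \<nu> \<omega>)"
    note \<nu>M = Hstop_M[OF \<nu>[THEN conjunct1]]
    note p\<nu> = payoff_meas[OF \<nu>M]
    define \<nu>' where "\<nu>' = (\<lambda>\<omega>. max (\<nu> \<omega>) (Suc k))"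
    have \<nu>'st: "stopping_time_upto M (\<lambda>k. H k) T \<nu>'"
      unfolding stopping_time_upto_def
    proof (intro conjI ballI allI impI)
      fix \<omega> assume "\<omega> \<in> space M" then show "\<nu>' \<omega> \<le> T"
        using \<nu>M kT unfolding \<nu>'_def by auto
    next
      fix s assume s: "s \<le> T"
      show "{\<omega> \<in> space M. \<nu>' \<omega> \<le> s} \<in> sets (H s)"
      proof (cases "Suc k \<le> s")
        case True
        then have "{\<omega> \<in> space M. \<nu>' \<omega> \<le> s} = {\<omega> \<in> space M. \<nu> \<omega> \<le> s}"
          unfolding \<nu>'_def by auto
        then show ?thesis using \<nu>[THEN conjunct1] s unfolding stopping_time_upto_def by simp
      next
        case False
        then have e: "{\<omega> \<in> space M. \<nu>' \<omega> \<le> s} = {}" unfolding \<nu>'_def by auto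
        show ?thesis unfolding e by simp
      qed
    qed
    note \<nu>'M = Hstop_M[OF \<nu>'st]
    note p\<nu>' = payoff_meas[OF \<nu>'M]
    have "AE \<omega> in M. real_cond_exp M (H (Suc k)) (payoff X Y \<tau> \<nu>') \<omega> \<le> real_cond_exp M (H (Suc k)) (payoff X Y \<tau> \<sigma>') \<omega>"
      by (rule \<sigma>'opt[OF \<nu>'st]) (simp add: \<nu>'_def)
    then have le1: "AE \<omega> in M. real_cond_exp M (H k) (payoff X Y \<tau> \<nu>') \<omega> \<le> W \<omega>"
      unfolding W_def by (rule tower_mono[OF kT(3) p\<nu>'(2) p\<sigma>'(2)])
    define C where "C = {\<omega>\<in>space M. \<nu> \<omega> \<le> k}"
    have CH: "C \<in> sets (H k)" using \<nu>[THEN conjunct1] kT unfolding C_def stopping_time_upto_def by simp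
    have CM: "C \<in> sets M" using CH H_sub[OF kT(2)] by (auto simp: subalgebra_def)
    have "AE \<omega> in M. real_cond_exp M (H k) (payoff X Y \<tau> \<nu>) \<omega>
        = real_cond_exp M (H k) (\<lambda>\<omega>. indicator C \<omega> * R k \<omega> + (1 - indicator C \<omega>) * payoff X Y \<tau> \<nu>' \<omega>) \<omega>"
    proof (rule K.real_cond_exp_cong)
      show "AE \<omega> in M. payoff X Y \<tau> \<nu> \<omega> = indicator C \<omega> * R k \<omega> + (1 - indicator C \<omega>) * payoff X Y \<tau> \<nu>' \<omega>"
        using \<nu>[THEN conjunct2] AE_space
      proof eventually_elim
        case (elim \<omega>)
        show ?case
        proof (cases "\<nu> \<omega> \<le> k")
          case True
          then have "\<nu> \<omega> = k" using elim by simp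
          then show ?thesis using elim unfolding C_def by (simp add: payoff_def)
        next
          case False
          then have "\<nu>' \<omega> = \<nu> \<omega>" unfolding \<nu>'_def by simp
          then show ?thesis using elim False unfolding C_def by (simp add: payoff_def)
        qed
      qed
      show "payoff X Y \<tau> \<nu> \<in> borel_measurable M" by (rule p\<nu>(1))
      show "(\<lambda>\<omega>. indicator C \<omega> * R k \<omega> + (1 - indicator C \<omega>) * payoff X Y \<tau> \<nu>' \<omega>) \<in> borel_measurable M"
        using CM R_meas(1)[OF kT(2)] p\<nu>'(1) by measurable
    qed
    moreover have "AE \<omega> in M. real_cond_exp M (H k) (\<lambda>\<omega>. indicator C \<omega> * R k \<omega> + (1 - indicator C \<omega>) * payoff X Y \<tau> \<nu>' \<omega>) \<omega>
        = indicator C \<omega> * R k \<omega> + (1 - indicator C \<omega>) * real_cond_exp M (H k) (payoff X Y \<tau> \<nu>') \<omega>"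
      by (rule decomp[OF kT(2) CH p\<nu>'(2)])
    ultimately show "AE \<omega> in M. real_cond_exp M (H k) (payoff X Y \<tau> \<nu>) \<omega> \<le> real_cond_exp M (H k) (payoff X Y \<tau> \<sigma>) \<omega>"
      using le1 E\<sigma> small AE_space
    proof eventually_elim
      case (elim \<omega>)
      let ?V = "real_cond_exp M (H k) (payoff X Y \<tau> \<nu>') \<omega>"
      have lhs: "real_cond_exp M (H k) (payoff X Y \<tau> \<nu>) \<omega> \<le> max (R k \<omega>) (W \<omega>)"
        using elim(1,2,3) by (auto simp: indicator_def)
      have rhs: "real_cond_exp M (H k) (payoff X Y \<tau> \<sigma>) \<omega> = max (R k \<omega>) (W \<omega>)"
      proof (cases "\<tau> \<omega> \<le> k")
        case True
        then show ?thesis using elim(4,5,6) by (auto simp: indicator_def)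
      next
        case False
        then have "\<omega> \<in> {\<omega>\<in>space M. k < \<tau> \<omega>}" using elim(6) by simp
        then have "\<omega> \<in> B \<longleftrightarrow> \<omega> \<in> D" using BD by blast
        then show ?thesis using elim(4,6) unfolding D_def by (auto simp: indicator_def)
      qed
      show ?case using lhs rhs by simp
    qed
  qed
qed

end



lemma ess_eq:
  assumes "is_ess_sup_family N \<Phi> Z"
  shows "AE \<omega> in N. ess_sup_family N \<Phi> \<omega> = Z \<omega>"
proof -
  have E: "is_ess_sup_family N \<Phi> (ess_sup_family N \<Phi>)"
    unfolding ess_sup_family_def by (rule someI[of "is_ess_sup_family N \<Phi>", OF assms])
  have "AE \<omega> in N. ess_sup_family N \<Phi> \<omega> \<le> Z \<omega>"
    using E assms unfolding is_ess_sup_family_def by blast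
  moreover have "AE \<omega> in N. Z \<omega> \<le> ess_sup_family N \<Phi> \<omega>"
    using E assms unfolding is_ess_sup_family_def by blast
  ultimately show ?thesis by eventually_elim simp
qed

context thm1 begin

lemma unif_density:
  assumes A: "A \<in> sets M" and p: "0 < measure M A"
  shows "uniform_measure M A = density M (\<lambda>\<omega>. ennreal (indicator A \<omega> / measure M A))"
proof -
  interpret prob_space M by (rule prob)
  have "(\<lambda>x. indicator A x / emeasure M A) = (\<lambda>\<omega>. ennreal (indicator A \<omega> / measure M A))"
    using p by (auto simp: fun_eq_iff indicator_def emeasure_eq_measure divide_ennreal[symmetric])
  then show ?thesis unfolding uniform_measure_def by simp
qed

lemma key:
  assumes t: "t \<le> T" and p: "0 < measure M {\<omega>\<in>space M. t < \<tau> \<omega>}" and f: "integrable M f"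
  shows "AE \<omega> in M. \<omega> \<in> {\<omega>\<in>space M. t < \<tau> \<omega>} \<longrightarrow>
     real_cond_exp (uniform_measure M {\<omega>\<in>space M. t < \<tau> \<omega>}) (G t) f \<omega> = real_cond_exp M (H t) f \<omega>"
proof -
  interpret prob_space M by (rule prob)
  define A where "A = {\<omega>\<in>space M. t < \<tau> \<omega>}"
  define q where "q = measure M A"
  define N where "N = uniform_measure M A"
  have q: "0 < q" "q \<noteq> 0" using p unfolding q_def A_def by auto
  have AH: "A \<in> sets (H t)"
  proof -
    have "A = space (H t) - {\<omega>\<in>space M. \<tau> \<omega> \<le> t}" unfolding A_def space_H by auto
    then show ?thesis using tau_H[OF order.refl t] by auto
  qed
  have AM: "A \<in> sets M" using AH H_sub[OF t] by (auto simp: subalgebra_def)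
  have Nd: "N = density M (\<lambda>\<omega>. ennreal (indicator A \<omega> / q))"
    unfolding N_def q_def by (rule unif_density[OF AM]) (use p in \<open>simp add: A_def\<close>)
  have dm: "(\<lambda>\<omega>. indicator A \<omega> / q) \<in> borel_measurable M" using AM by measurable
  have dpos: "AE \<omega> in M. 0 \<le> indicator A \<omega> / q" using q by simp
  have intN: "integral\<^sup>L N h = (\<integral>\<omega>. indicator A \<omega> * h \<omega> \<partial>M) / q" if "h \<in> borel_measurable M" for h :: "'a \<Rightarrow> real"
  proof -
    have "integral\<^sup>L N h = (\<integral>\<omega>. (indicator A \<omega> / q) *\<^sub>R h \<omega> \<partial>M)"
      unfolding Nd by (rule integral_density[OF that dm dpos])
    also have "\<dots> = (\<integral>\<omega>. (indicator A \<omega> * h \<omega>) / q \<partial>M)" by simp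
    also have "\<dots> = (\<integral>\<omega>. indicator A \<omega> * h \<omega> \<partial>M) / q" by (rule integral_divide_zero)
    finally show ?thesis .
  qed
  have integN: "integrable N h \<longleftrightarrow> integrable M (\<lambda>\<omega>. indicator A \<omega> * h \<omega>)" if "h \<in> borel_measurable M" for h :: "'a \<Rightarrow> real"
  proof -
    have e: "(\<lambda>\<omega>. (indicator A \<omega> / q) *\<^sub>R h \<omega>) = (\<lambda>\<omega>. indicator A \<omega> * h \<omega> / q)"
      by (simp add: fun_eq_iff)
    have i1: "integrable N h \<longleftrightarrow> integrable M (\<lambda>\<omega>. indicator A \<omega> * h \<omega> / q)"
      unfolding Nd e[symmetric] by (rule integrable_density[OF that dm dpos])
    have i2: "integrable M (\<lambda>\<omega>. g \<omega> / q) \<longleftrightarrow> integrable M g" for g :: "'a \<Rightarrow> real"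
    proof
      assume "integrable M (\<lambda>\<omega>. g \<omega> / q)"
      then have "integrable M (\<lambda>\<omega>. q * (g \<omega> / q))" by (rule integrable_mult_right)
      then show "integrable M g" using q by simp
    next
      assume "integrable M g" then show "integrable M (\<lambda>\<omega>. g \<omega> / q)" by (rule integrable_divide_zero)
    qed
    show ?thesis using i1 i2[of "\<lambda>\<omega>. indicator A \<omega> * h \<omega>"] by simp
  qed
  have fm: "f \<in> borel_measurable M" using f by (rule borel_measurable_integrable)
  have intAf: "integrable M (\<lambda>\<omega>. indicator A \<omega> * f \<omega>)" using integrable_mult_indicator[OF AM f] by simp
  have fN: "integrable N f" using integN[OF fm] intAf by simp
  have sN: "sets N = sets M" "space N = space M" unfolding N_def by simp_all
  have subN: "subalgebra N (G t)" using G_sub[OF t] sN by (simp add: subalgebra_def)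
  interpret PN: prob_space N unfolding N_def
    by (rule prob_space_uniform_measure) (use p in \<open>auto simp: A_def emeasure_eq_measure\<close>)
  interpret NG: sigma_finite_subalgebra N "G t"
    by (rule finite_measure_subalgebra_is_sigma_finite, unfold_locales, rule subN)
  interpret K: sigma_finite_subalgebra M "H t" by (rule sfs_H[OF t])
  define W where "W = real_cond_exp N (G t) f"
  have WG: "W \<in> borel_measurable (G t)" unfolding W_def by simp
  have WM: "W \<in> borel_measurable M" using measurable_from_subalg[OF G_sub[OF t] WG] .
  have WH: "W \<in> borel_measurable (H t)" using measurable_from_subalg[OF subalg_GH[OF order.refl t] WG] .
  have WN: "integrable N W" unfolding W_def by (rule NG.real_cond_exp_int(1)[OF fN])
  have intAW: "integrable M (\<lambda>\<omega>. indicator A \<omega> * W \<omega>)" using integN[OF WM] WN by simp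
  have IA: "(indicator A :: 'a \<Rightarrow> real) \<in> borel_measurable (H t)" using AH by simp
  have c1: "AE \<omega> in M. real_cond_exp M (H t) (\<lambda>\<omega>. indicator A \<omega> * f \<omega>) \<omega> = indicator A \<omega> * W \<omega>"
  proof (rule K.real_cond_exp_charact)
    fix D assume D: "D \<in> sets (H t)"
    obtain B where B: "B \<in> sets (G t)" and BD: "D \<inter> A = B \<inter> A"
      using trace[OF t D] unfolding A_def by blast
    have BM: "B \<in> sets M" using B G_sub[OF t] by (auto simp: subalgebra_def)
    have ind: "indicator D \<omega> * indicator A \<omega> = indicator B \<omega> * (indicator A \<omega> :: real)" for \<omega>
    proof -
      have "\<omega> \<in> D \<and> \<omega> \<in> A \<longleftrightarrow> \<omega> \<in> B \<and> \<omega> \<in> A" using BD by blast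
      then show ?thesis by (auto simp: indicator_def)
    qed
    have gen: "(\<integral>\<omega>\<in>D. indicator A \<omega> * g \<omega> \<partial>M) = (\<integral>\<omega>. indicator A \<omega> * (indicator B \<omega> * g \<omega>) \<partial>M)" for g :: "'a \<Rightarrow> real"
    proof -
      have "(\<integral>\<omega>\<in>D. indicator A \<omega> * g \<omega> \<partial>M) = (\<integral>\<omega>. (indicator D \<omega> * indicator A \<omega>) * g \<omega> \<partial>M)"
        unfolding set_lebesgue_integral_def by (simp add: mult.assoc)
      also have "\<dots> = (\<integral>\<omega>. indicator A \<omega> * (indicator B \<omega> * g \<omega>) \<partial>M)"
        unfolding ind by (simp add: mult_ac)
      finally show ?thesis .
    qed
    have "(\<integral>\<omega>\<in>B. f \<omega> \<partial>N) = (\<integral>\<omega>\<in>B. W \<omega> \<partial>N)"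
      unfolding W_def by (rule NG.real_cond_exp_intA[OF fN B])
    then have "integral\<^sup>L N (\<lambda>\<omega>. indicator B \<omega> * f \<omega>) = integral\<^sup>L N (\<lambda>\<omega>. indicator B \<omega> * W \<omega>)"
      unfolding set_lebesgue_integral_def by simp
    moreover have "integral\<^sup>L N (\<lambda>\<omega>. indicator B \<omega> * f \<omega>) = (\<integral>\<omega>. indicator A \<omega> * (indicator B \<omega> * f \<omega>) \<partial>M) / q"
      by (rule intN) (use BM fm in measurable)
    moreover have "integral\<^sup>L N (\<lambda>\<omega>. indicator B \<omega> * W \<omega>) = (\<integral>\<omega>. indicator A \<omega> * (indicator B \<omega> * W \<omega>) \<partial>M) / q"
      by (rule intN) (use BM WM in measurable)
    ultimately have "(\<integral>\<omega>. indicator A \<omega> * (indicator B \<omega> * f \<omega>) \<partial>M) = (\<integral>\<omega>. indicator A \<omega> * (indicator B \<omega> * W \<omega>) \<partial>M)"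
      using q by simp
    then show "(\<integral>\<omega>\<in>D. indicator A \<omega> * f \<omega> \<partial>M) = (\<integral>\<omega>\<in>D. indicator A \<omega> * W \<omega> \<partial>M)"
      unfolding gen .
  next
    show "integrable M (\<lambda>\<omega>. indicator A \<omega> * f \<omega>)" by (rule intAf)
    show "integrable M (\<lambda>\<omega>. indicator A \<omega> * W \<omega>)" by (rule intAW)
    show "(\<lambda>\<omega>. indicator A \<omega> * W \<omega>) \<in> borel_measurable (H t)" using IA WH by measurable
  qed
  have c2: "AE \<omega> in M. real_cond_exp M (H t) (\<lambda>\<omega>. indicator A \<omega> * f \<omega>) \<omega> = indicator A \<omega> * real_cond_exp M (H t) f \<omega>"
    by (rule K.real_cond_exp_mult[OF IA fm intAf])
  show ?thesis using c1 c2 unfolding A_def[symmetric] N_def[symmetric] W_def[symmetric]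
    by eventually_elim (auto simp: indicator_def)
qed

end

theorem theorem1:
  fixes M :: "'a measure" and F G :: "nat \<Rightarrow> 'a measure" and T t :: nat
    and X Y :: "nat \<Rightarrow> 'a \<Rightarrow> real" and \<tau> :: "'a \<Rightarrow> nat"
  assumes "prob_space M"
    and "0 < T"
    and F_sub: "\<And>s. s \<le> T \<Longrightarrow> subalgebra M (F s)"
    and F_mono: "\<And>r s. r \<le> s \<Longrightarrow> s \<le> T \<Longrightarrow> sets (F r) \<subseteq> sets (F s)"
    and G_sub: "\<And>s. s \<le> T \<Longrightarrow> subalgebra M (G s)"
    and G_mono: "\<And>r s. r \<le> s \<Longrightarrow> s \<le> T \<Longrightarrow> sets (G r) \<subseteq> sets (G s)"
    and GF: "\<And>s. s \<le> T \<Longrightarrow> sets (G s) \<subseteq> sets (F s)"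
    and X_adapted: "\<And>s. s \<le> T \<Longrightarrow> X s \<in> borel_measurable (G s)"
    and Y_adapted: "\<And>s. s \<le> T \<Longrightarrow> Y s \<in> borel_measurable (G s)"
    and X_int: "integrable M (\<lambda>\<omega>. Max ((\<lambda>s. \<bar>X s \<omega>\<bar>) ` {0..T}))"
    and Y_int: "integrable M (\<lambda>\<omega>. Max ((\<lambda>s. \<bar>Y s \<omega>\<bar>) ` {0..T}))"
    and \<tau>: "stopping_time_upto M F T \<tau>"
    and "t < T"
  shows "\<exists>\<nu>h \<in> stopping_times_from M G T t.
     (AE \<omega> in M.
        ereal (real_cond_exp M (prog_enlargement M G \<tau> t) (payoff X Y \<tau> \<nu>h) \<omega>)
        = ess_sup_family M
            ((\<lambda>\<nu> \<omega>. ereal (real_cond_exp M (prog_enlargement M G \<tau> t) (payoff X Y \<tau> \<nu>) \<omega>))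
               ` stopping_times_from M (prog_enlargement M G \<tau>) T t) \<omega>) \<and>
     (AE \<omega> in M.
        ess_sup_family M
            ((\<lambda>\<nu> \<omega>. ereal (real_cond_exp M (prog_enlargement M G \<tau> t) (payoff X Y \<tau> \<nu>) \<omega>))
               ` stopping_times_from M (prog_enlargement M G \<tau>) T t) \<omega>
        = ereal (Y (\<tau> \<omega>) \<omega> * (if \<tau> \<omega> \<le> t then 1 else 0))
          + (if t < \<tau> \<omega> then 1 else 0) *
            ess_sup_family (uniform_measure M {\<omega>'\<in>space M. t < \<tau> \<omega>'})
              ((\<lambda>\<nu> \<omega>. ereal (real_cond_exp (uniform_measure M {\<omega>'\<in>space M. t < \<tau> \<omega>'}) (G t)
                                   (payoff X Y \<tau> \<nu>) \<omega>))
                 ` stopping_times_from M G T t) \<omega>)"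
proof -
  interpret thm1 M F G T t X Y \<tau>
    by (rule thm1.intro[OF assms(1) F_sub G_sub G_mono X_adapted Y_adapted X_int Y_int \<tau>])
  interpret prob_space M by (rule assms(1))
  have tT: "t \<le> T" using \<open>t < T\<close> by simp
  obtain \<sigma> where \<sigma>st: "stopping_time_upto M G T \<sigma>" and \<sigma>ge: "\<forall>\<omega>\<in>space M. t \<le> \<sigma> \<omega>"
    and \<sigma>opt: "\<And>\<nu>. stopping_time_upto M (\<lambda>k. H k) T \<nu> \<Longrightarrow> (AE \<omega> in M. t \<le> \<nu> \<omega>) \<Longrightarrow>
        (AE \<omega> in M. real_cond_exp M (H t) (payoff X Y \<tau> \<nu>) \<omega> \<le> real_cond_exp M (H t) (payoff X Y \<tau> \<sigma>) \<omega>)"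
    using snell[OF tT] by blast
  have \<sigma>AE: "AE \<omega> in M. t \<le> \<sigma> \<omega>" using \<sigma>ge by (intro AE_I2) simp
  have \<sigma>G: "\<sigma> \<in> stopping_times_from M G T t"
    unfolding stopping_times_from_def using \<sigma>st \<sigma>AE by simp
  have \<sigma>H: "\<sigma> \<in> stopping_times_from M (prog_enlargement M G \<tau>) T t"
    unfolding stopping_times_from_def using Gstop_H[OF \<sigma>st] \<sigma>AE by simp
  note p\<sigma> = payoff_meas[OF Hstop_M[OF Gstop_H[OF \<sigma>st]]]
  define \<Phi>1 where "\<Phi>1 = ((\<lambda>\<nu> \<omega>. ereal (real_cond_exp M (prog_enlargement M G \<tau> t) (payoff X Y \<tau> \<nu>) \<omega>))
               ` stopping_times_from M (prog_enlargement M G \<tau>) T t)"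
  define Z1 where "Z1 = (\<lambda>\<omega>. ereal (real_cond_exp M (prog_enlargement M G \<tau> t) (payoff X Y \<tau> \<sigma>) \<omega>))"
  have ess1: "is_ess_sup_family M \<Phi>1 Z1"
    unfolding is_ess_sup_family_def
  proof (intro conjI ballI allI impI)
    show "Z1 \<in> borel_measurable M" unfolding Z1_def by measurable
  next
    fix \<phi> assume "\<phi> \<in> \<Phi>1"
    then obtain \<nu> where \<nu>: "\<nu> \<in> stopping_times_from M (prog_enlargement M G \<tau>) T t"
      and \<phi>: "\<phi> = (\<lambda>\<omega>. ereal (real_cond_exp M (prog_enlargement M G \<tau> t) (payoff X Y \<tau> \<nu>) \<omega>))"
      unfolding \<Phi>1_def by blast
    have "AE \<omega> in M. real_cond_exp M (H t) (payoff X Y \<tau> \<nu>) \<omega> \<le> real_cond_exp M (H t) (payoff X Y \<tau> \<sigma>) \<omega>"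
      using \<nu> unfolding stopping_times_from_def by (intro \<sigma>opt) auto
    then show "AE \<omega> in M. \<phi> \<omega> \<le> Z1 \<omega>" unfolding \<phi> Z1_def by eventually_elim simp
  next
    fix Z' assume "Z' \<in> borel_measurable M \<and> (\<forall>\<phi>\<in>\<Phi>1. AE \<omega> in M. \<phi> \<omega> \<le> Z' \<omega>)"
    moreover have "Z1 \<in> \<Phi>1" unfolding \<Phi>1_def Z1_def using \<sigma>H by blast
    ultimately show "AE \<omega> in M. Z1 \<omega> \<le> Z' \<omega>" by blast
  qed
  have E1: "AE \<omega> in M. ess_sup_family M \<Phi>1 \<omega> = Z1 \<omega>" by (rule ess_eq[OF ess1])
  have small: "AE \<omega> in M. \<tau> \<omega> \<le> t \<longrightarrow> real_cond_exp M (H t) (payoff X Y \<tau> \<sigma>) \<omega> = R t \<omega>"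
    by (rule tau_small[OF tT \<sigma>ge p\<sigma>])
  define A where "A = {\<omega>'\<in>space M. t < \<tau> \<omega>'}"
  define \<Phi>2 where "\<Phi>2 = ((\<lambda>\<nu> \<omega>. ereal (real_cond_exp (uniform_measure M A) (G t) (payoff X Y \<tau> \<nu>) \<omega>))
                 ` stopping_times_from M G T t)"
  have AM: "A \<in> sets M"
  proof -
    have "A = space M - {\<omega>\<in>space M. \<tau> \<omega> \<le> t}" unfolding A_def by auto
    then show ?thesis using tau_le_M[OF tT] by auto
  qed
  have second: "AE \<omega> in M. ess_sup_family M \<Phi>1 \<omega> = ereal (Y (\<tau> \<omega>) \<omega> * (if \<tau> \<omega> \<le> t then 1 else 0))
          + (if t < \<tau> \<omega> then 1 else 0) * ess_sup_family (uniform_measure M A) \<Phi>2 \<omega>"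
  proof (cases "measure M A = 0")
    case True
    have "A \<in> null_sets M" using AM True by (simp add: null_sets_def emeasure_eq_measure)
    then have nA: "AE \<omega> in M. \<omega> \<notin> A" by (rule AE_not_in)
    show ?thesis using E1 small nA AE_space
    proof eventually_elim
      case (elim \<omega>)
      then have "\<tau> \<omega> \<le> t" unfolding A_def by auto
      then show ?case using elim unfolding Z1_def by (simp add: payoff_def)
    qed
  next
    case False
    then have p: "0 < measure M A" by (simp add: zero_less_measure_iff)
    define N where "N = uniform_measure M A"
    have eA: "emeasure M A \<noteq> 0" "emeasure M A < \<infinity>" using p by (auto simp: emeasure_eq_measure)
    define Z2 where "Z2 = (\<lambda>\<omega>. ereal (real_cond_exp N (G t) (payoff X Y \<tau> \<sigma>) \<omega>))"
    have keyA: "AE \<omega> in M. \<omega> \<in> A \<longrightarrow> real_cond_exp N (G t) (payoff X Y \<tau> \<nu>) \<omega> = real_cond_exp M (H t) (payoff X Y \<tau> \<nu>) \<omega>"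
      if "integrable M (payoff X Y \<tau> \<nu>)" for \<nu>
      using key[OF tT _ that] p unfolding N_def A_def by simp
    have ess2: "is_ess_sup_family N \<Phi>2 Z2"
      unfolding is_ess_sup_family_def
    proof (intro conjI ballI allI impI)
      show "Z2 \<in> borel_measurable N" unfolding Z2_def by measurable
    next
      fix \<phi> assume "\<phi> \<in> \<Phi>2"
      then obtain \<nu> where \<nu>: "\<nu> \<in> stopping_times_from M G T t"
        and \<phi>: "\<phi> = (\<lambda>\<omega>. ereal (real_cond_exp N (G t) (payoff X Y \<tau> \<nu>) \<omega>))"
        unfolding \<Phi>2_def N_def by blast
      have \<nu>st: "stopping_time_upto M G T \<nu>" and \<nu>AE: "AE \<omega> in M. t \<le> \<nu> \<omega>"
        using \<nu> unfolding stopping_times_from_def by auto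
      note p\<nu> = payoff_meas[OF Hstop_M[OF Gstop_H[OF \<nu>st]]]
      have le: "AE \<omega> in M. real_cond_exp M (H t) (payoff X Y \<tau> \<nu>) \<omega> \<le> real_cond_exp M (H t) (payoff X Y \<tau> \<sigma>) \<omega>"
        by (rule \<sigma>opt[OF Gstop_H[OF \<nu>st] \<nu>AE])
      have "AE \<omega> in M. \<omega> \<in> A \<longrightarrow> \<phi> \<omega> \<le> Z2 \<omega>"
        using le keyA[OF p\<nu>(2)] keyA[OF p\<sigma>(2)] unfolding \<phi> Z2_def by eventually_elim auto
      then show "AE \<omega> in N. \<phi> \<omega> \<le> Z2 \<omega>" unfolding N_def using AE_uniform_measure[OF eA] by simp
    next
      fix Z' assume "Z' \<in> borel_measurable N \<and> (\<forall>\<phi>\<in>\<Phi>2. AE \<omega> in N. \<phi> \<omega> \<le> Z' \<omega>)"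
      moreover have "Z2 \<in> \<Phi>2" unfolding \<Phi>2_def Z2_def N_def using \<sigma>G by blast
      ultimately show "AE \<omega> in N. Z2 \<omega> \<le> Z' \<omega>" by blast
    qed
    have "AE \<omega> in N. ess_sup_family N \<Phi>2 \<omega> = Z2 \<omega>" by (rule ess_eq[OF ess2])
    then have E2: "AE \<omega> in M. \<omega> \<in> A \<longrightarrow> ess_sup_family N \<Phi>2 \<omega> = Z2 \<omega>"
      unfolding N_def using AE_uniform_measure[OF eA] by simp
    show ?thesis using E1 E2 small keyA[OF p\<sigma>(2)] AE_space unfolding N_def[symmetric]
    proof eventually_elim
      case (elim \<omega>)
      show ?case
      proof (cases "\<tau> \<omega> \<le> t")
        case True
        then have "\<omega> \<notin> A" unfolding A_def by auto
        then show ?thesis using elim True unfolding Z1_def by (simp add: payoff_def)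
      next
        case False
        then have "\<omega> \<in> A" using elim unfolding A_def by auto
        then show ?thesis using elim False unfolding Z1_def Z2_def by simp
      qed
    qed
  qed
  have c1: "AE \<omega> in M. ereal (real_cond_exp M (prog_enlargement M G \<tau> t) (payoff X Y \<tau> \<sigma>) \<omega>) = ess_sup_family M \<Phi>1 \<omega>"
    using E1 unfolding Z1_def by eventually_elim simp
  show ?thesis
  proof (rule bexI[OF _ \<sigma>G], rule conjI)
    show "AE \<omega> in M. ereal (real_cond_exp M (prog_enlargement M G \<tau> t) (payoff X Y \<tau> \<sigma>) \<omega>)
        = ess_sup_family M
            ((\<lambda>\<nu> \<omega>. ereal (real_cond_exp M (prog_enlargement M G \<tau> t) (payoff X Y \<tau> \<nu>) \<omega>))
               ` stopping_times_from M (prog_enlargement M G \<tau>) T t) \<omega>"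
      using c1 unfolding \<Phi>1_def .
    show "AE \<omega> in M.
        ess_sup_family M
            ((\<lambda>\<nu> \<omega>. ereal (real_cond_exp M (prog_enlargement M G \<tau> t) (payoff X Y \<tau> \<nu>) \<omega>))
               ` stopping_times_from M (prog_enlargement M G \<tau>) T t) \<omega>
        = ereal (Y (\<tau> \<omega>) \<omega> * (if \<tau> \<omega> \<le> t then 1 else 0))
          + (if t < \<tau> \<omega> then 1 else 0) *
            ess_sup_family (uniform_measure M {\<omega>'\<in>space M. t < \<tau> \<omega>'})
              ((\<lambda>\<nu> \<omega>. ereal (real_cond_exp (uniform_measure M {\<omega>'\<in>space M. t < \<tau> \<omega>'}) (G t)
                                   (payoff X Y \<tau> \<nu>) \<omega>))
                 ` stopping_times_from M G T t) \<omega>"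
      using second unfolding \<Phi>1_def \<Phi>2_def A_def .
  qed
qed

end
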